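(* Let $E\subset[1,2]$ and $d\ge2$. Suppose that $0\le\beta<1$ and $\sup_{0<\delta<1}\delta^\beta N(E,\delta)<\infty$. Let $p_0=1+\frac{\beta}{d-1}$ and $p_1=1+\frac{p_0}{d}$. Then $\mathfrak{M}_{E,p_0}$ is bounded from $L^{p_0}(\mathbb{R}^+)$ to $L^{p_0}(\mu_d)$, and $\mathfrak{M}_{E,p_1}$ is bounded from $L^{p_1}(\mathbb{R}^+)$ to $L^{p_1d}(\mu_d)$.
   Context: $N(E,\delta)$ is the minimal number of intervals of length $\delta$ covering $E$. $\mu_d$ is the measure on $\mathbb{R}^+$ with $d\mu_d=r^{d-1}dr$; $L^p(\mathbb{R}^+)$ is with respect to Lebesgue measure. For $1\le p\le\infty$ with conjugate exponent $p'$, and $g$ on $\mathbb{R}^+$, $$\mathfrak{M}_{E,p}g(r)=\chi_{(2/3,4)}(r)\sup_{t\in E,\ r/2<t<3r/2}\int_{|r-t|}^{r+t}s^{\frac{d-1}{p'}-1}|g(s)|\,ds.$$ *)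

theory Defs
  imports "HOL-Analysis.Analysis"
begin

definition covering_number :: "real set \<Rightarrow> real \<Rightarrow> nat" where
  "covering_number E \<delta> =
     (LEAST n. \<exists>a :: nat \<Rightarrow> real. E \<subseteq> (\<Union>i<n. {a i .. a i + \<delta>}))"

definition epow :: "ennreal \<Rightarrow> real \<Rightarrow> ennreal" where
  "epow x q = (if x = \<infinity> then \<infinity> else ennreal (enn2real x powr q))"

text \<open>The maximal operator M_{E,p}; the exponent (d-1)/p' - 1 with 1/p' = 1 - 1/p.\<close>
definition maxop :: "real set \<Rightarrow> nat \<Rightarrow> real \<Rightarrow> (real \<Rightarrow> real) \<Rightarrow> real \<Rightarrow> ennreal" where
  "maxop E d p g r =
     (if r \<in> {2/3<..<4} then
        (SUP t \<in> {t \<in> E. r/2 < t \<and> t < 3*r/2}.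
           \<integral>\<^sup>+ s \<in> {\<bar>r - t\<bar> .. r + t}.
              ennreal (s powr ((real d - 1) * (1 - 1/p) - 1) * \<bar>g s\<bar>) \<partial>lborel)
      else 0)"

definition Lp_norm_leb :: "real \<Rightarrow> (real \<Rightarrow> real) \<Rightarrow> ennreal" where
  "Lp_norm_leb p g = epow (\<integral>\<^sup>+ s \<in> {0<..}. ennreal (\<bar>g s\<bar> powr p) \<partial>lborel) (1/p)"

text \<open>Norm of a nonnegative extended function in L^q(mu_d), d mu_d = r^(d-1) dr.\<close>
definition Lq_norm_mu :: "nat \<Rightarrow> real \<Rightarrow> (real \<Rightarrow> ennreal) \<Rightarrow> ennreal" where
  "Lq_norm_mu d q F = epow (\<integral>\<^sup>+ r \<in> {0<..}. epow (F r) q * ennreal (r ^ (d - 1)) \<partial>lborel) (1/q)"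

definition bounded_Lp_Lq_mu :: "((real \<Rightarrow> real) \<Rightarrow> real \<Rightarrow> ennreal) \<Rightarrow> real \<Rightarrow> real \<Rightarrow> nat \<Rightarrow> bool" where
  "bounded_Lp_Lq_mu T p q d \<longleftrightarrow>
     (\<exists>C::real. \<forall>g \<in> borel_measurable lborel.
        Lq_norm_mu d q (T g) \<le> ennreal C * Lp_norm_leb p g)"

end

theory Submission
  imports Defs "HOL-Analysis.Analysis"
begin

lemma key_ineq:
  fixes p x c :: real
  assumes "p \<ge> 1" "x \<ge> 0" "c > 0"
  shows "x * c powr (p - 1) \<le> x powr p / p + (1 - 1/p) * c powr p"
proof (cases "x = 0")
  case True
  then show ?thesis using assms by simp
next
  case False
  then have xp: "x > 0" using assms by simp
  have "(x powr p) powr (1/p) * (c powr p) powr (1 - 1/p) \<le> (1/p) * x powr p + (1 - 1/p) * c powr p"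
    using assms xp by (intro Youngs_inequality_0) (auto simp: field_simps)
  moreover have "(x powr p) powr (1/p) = x" using assms xp by (simp add: powr_powr)
  moreover have "(c powr p) powr (1 - 1/p) = c powr (p - 1)" using assms
    by (simp add: powr_powr algebra_simps)
  ultimately show ?thesis by simp
qed

lemma power_mean_sum:
  fixes w x :: "'a \<Rightarrow> real" and p :: real
  assumes "finite I" "p \<ge> 1" "\<And>i. i \<in> I \<Longrightarrow> w i \<ge> 0" "\<And>i. i \<in> I \<Longrightarrow> x i \<ge> 0"
  shows "(\<Sum>i\<in>I. w i * x i) powr p \<le> (\<Sum>i\<in>I. w i) powr (p - 1) * (\<Sum>i\<in>I. w i * x i powr p)"
proof -
  define Z where "Z = (\<Sum>i\<in>I. w i * x i)"
  define W where "W = (\<Sum>i\<in>I. w i)"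
  have Z0: "Z \<ge> 0" unfolding Z_def using assms by (intro sum_nonneg) auto
  have W0: "W \<ge> 0" unfolding W_def using assms by (intro sum_nonneg) auto
  have R0: "(\<Sum>i\<in>I. w i * x i powr p) \<ge> 0" using assms by (intro sum_nonneg) auto
  show ?thesis
  proof (cases "Z = 0")
    case True
    then show ?thesis using W0 R0 by (simp add: Z_def[symmetric] W_def[symmetric])
  next
    case False
    then have Zp: "Z > 0" using Z0 by simp
    have "W \<noteq> 0"
    proof
      assume "W = 0"
      then have "\<forall>i\<in>I. w i = 0" using assms unfolding W_def by (subst (asm) sum_nonneg_eq_0_iff) auto
      then have "Z = 0" unfolding Z_def by simp
      then show False using False by simp
    qed
    then have Wp: "W > 0" using W0 by simp
    define c where "c = Z / W"
    have cp: "c > 0" using Zp Wp by (simp add: c_def)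
    have "(\<Sum>i\<in>I. w i * (x i * c powr (p - 1))) \<le> (\<Sum>i\<in>I. w i * (x i powr p / p + (1 - 1/p) * c powr p))"
      using assms cp by (intro sum_mono mult_left_mono key_ineq) auto
    also have "\<dots> = (1/p) * (\<Sum>i\<in>I. w i * x i powr p) + (1 - 1/p) * c powr p * W"
    proof -
      have "\<And>i. w i * (x i powr p / p + (1 - 1/p) * c powr p) = (1/p) * (w i * x i powr p) + ((1 - 1/p) * c powr p) * w i"
        by (simp add: algebra_simps)
      then show ?thesis unfolding W_def by (simp add: sum.distrib sum_distrib_left)
    qed
    finally have 0: "(\<Sum>i\<in>I. w i * (x i * c powr (p - 1))) \<le> (1/p) * (\<Sum>i\<in>I. w i * x i powr p) + (1 - 1/p) * c powr p * W" .
    have "(\<Sum>i\<in>I. w i * (x i * c powr (p - 1))) = Z * c powr (p - 1)"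
      unfolding Z_def by (simp add: sum_distrib_right mult.assoc)
    with 0 have 1: "Z * c powr (p - 1) \<le> (1/p) * (\<Sum>i\<in>I. w i * x i powr p) + (1 - 1/p) * c powr p * W" by simp
    have Zeq: "Z = W * c" using Wp by (simp add: c_def)
    have "Z * c powr (p - 1) = W * c powr p"
      using cp by (simp add: Zeq powr_diff field_simps)
    with 1 have "W * c powr p \<le> (\<Sum>i\<in>I. w i * x i powr p)"
      using assms(2) by (simp add: algebra_simps divide_le_cancel)
    moreover have "Z powr p = W powr (p - 1) * (W * c powr p)"
      using Wp cp by (simp add: Zeq powr_mult powr_diff field_simps)
    ultimately show ?thesis unfolding Z_def[symmetric] W_def[symmetric]
      using Wp by (simp add: mult_left_mono)
  qed
qed

lemma geom_rev:
  fixes \<rho> :: real assumes "0 \<le> \<rho>" "\<rho> < 1"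
  shows "(\<Sum>j\<le>m. \<rho> ^ (m - j)) \<le> 1 / (1 - \<rho>)"
proof -
  have "(\<Sum>j\<le>m. \<rho> ^ (m - j)) = (\<Sum>j=0..m. \<rho> ^ (m - j))" by (simp add: atLeast0AtMost)
  also have "\<dots> = (\<Sum>j=0..m. \<rho> ^ j)"
    using sum.atLeastAtMost_rev[of "\<lambda>j. \<rho> ^ (m - j)" 0 m] by simp
  also have "\<dots> = (\<Sum>j<Suc m. \<rho> ^ j)" by (simp add: atLeast0AtMost lessThan_Suc_atMost)
  also have "\<dots> = (1 - \<rho> ^ Suc m) / (1 - \<rho>)" unfolding sum_gp_strict using assms by simp
  also have "\<dots> \<le> 1 / (1 - \<rho>)" using assms by (intro divide_right_mono) auto
  finally show ?thesis .
qed

lemma geom_tail: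
  fixes \<rho> :: real assumes "0 \<le> \<rho>" "\<rho> < 1"
  shows "(\<Sum>m<N. if j \<le> m then \<rho> ^ (m - j) else 0) \<le> 1 / (1 - \<rho>)"
proof -
  have "(\<Sum>m<N. if j \<le> m then \<rho> ^ (m - j) else 0) = (\<Sum>k<N - j. \<rho> ^ k)"
  proof (induction N)
    case 0 then show ?case by simp
  next
    case (Suc N)
    show ?case
    proof (cases "j \<le> N")
      case True
      then have "Suc N - j = Suc (N - j)" by simp
      then show ?thesis using Suc True by simp
    next
      case False
      then have "Suc N - j = 0" "N - j = 0" by auto
      then show ?thesis using Suc False by simp
    qed
  qed
  also have "\<dots> = (1 - \<rho> ^ (N - j)) / (1 - \<rho>)" unfolding sum_gp_strict using assms by simp
  also have "\<dots> \<le> 1 / (1 - \<rho>)" using assms by (intro divide_right_mono) auto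
  finally show ?thesis .
qed

lemma discrete_hardy:
  fixes Y :: "nat \<Rightarrow> real" and \<rho> p q S :: real
  assumes rho: "0 < \<rho>" "\<rho> < 1" and pq: "1 \<le> p" "p \<le> q"
    and Y0: "\<And>j. Y j \<ge> 0" and YS: "\<And>n. (\<Sum>j<n. Y j powr p) \<le> S"
  shows "(\<Sum>m<N. (\<Sum>j\<le>m. \<rho> ^ (m - j) * Y j) powr q) \<le> (1 / (1 - \<rho>)) powr q * S powr (q / p)"
proof -
  define L where "L = 1 / (1 - \<rho>)"
  have L0: "L > 0" using rho by (simp add: L_def)
  define z where "z m = (\<Sum>j\<le>m. \<rho> ^ (m - j) * Y j)" for m
  have z0: "z m \<ge> 0" for m unfolding z_def using Y0 rho by (intro sum_nonneg) auto
  have S0: "S \<ge> 0" using YS[of 0] by simp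
  have i: "z m powr p \<le> L powr (p - 1) * (\<Sum>j\<le>m. \<rho> ^ (m - j) * Y j powr p)" for m
  proof -
    have "z m powr p \<le> (\<Sum>j\<le>m. \<rho> ^ (m - j)) powr (p - 1) * (\<Sum>j\<le>m. \<rho> ^ (m - j) * Y j powr p)"
      unfolding z_def using rho pq Y0 by (intro power_mean_sum) auto
    also have "\<dots> \<le> L powr (p - 1) * (\<Sum>j\<le>m. \<rho> ^ (m - j) * Y j powr p)"
      using rho pq geom_rev[of \<rho> m] unfolding L_def
      by (intro mult_right_mono powr_mono2 sum_nonneg) auto
    finally show ?thesis .
  qed
  have ii: "(\<Sum>m<N. z m powr p) \<le> L powr p * S" for N
  proof -
    have "(\<Sum>m<N. z m powr p) \<le> (\<Sum>m<N. L powr (p - 1) * (\<Sum>j\<le>m. \<rho> ^ (m - j) * Y j powr p))"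
      by (intro sum_mono i)
    also have "\<dots> = L powr (p - 1) * (\<Sum>m<N. \<Sum>j<N. if j \<le> m then \<rho> ^ (m - j) * Y j powr p else 0)"
    proof -
      have "(\<Sum>j\<le>m. \<rho> ^ (m - j) * Y j powr p) = (\<Sum>j<N. if j \<le> m then \<rho> ^ (m - j) * Y j powr p else 0)"
        if "m < N" for m
      proof -
        have "{j. j < N \<and> j \<le> m} = {..m}" using that by auto
        then show ?thesis by (simp add: sum.inter_filter[symmetric])
      qed
      then show ?thesis by (simp add: sum_distrib_left)
    qed
    also have "\<dots> = L powr (p - 1) * (\<Sum>j<N. Y j powr p * (\<Sum>m<N. if j \<le> m then \<rho> ^ (m - j) else 0))"
      by (subst sum.swap) (simp add: sum_distrib_left if_distrib mult.commute cong: if_cong)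
    also have "\<dots> \<le> L powr (p - 1) * (\<Sum>j<N. Y j powr p * L)"
      using geom_tail[of \<rho>] rho unfolding L_def
      by (intro mult_left_mono sum_mono) auto
    also have "\<dots> = L powr (p - 1) * L * (\<Sum>j<N. Y j powr p)"
      by (simp add: sum_distrib_right sum_distrib_left mult.commute mult.left_commute)
    also have "\<dots> \<le> L powr (p - 1) * L * S"
      using YS L0 by (intro mult_left_mono) auto
    also have "L powr (p - 1) * L = L powr p" using L0 by (simp add: powr_diff)
    finally show ?thesis .
  qed
  define M where "M = L powr p * S"
  have M0: "M \<ge> 0" using L0 S0 by (simp add: M_def)
  have iii: "z m powr p \<le> M" for m
  proof -
    have "z m powr p \<le> (\<Sum>k<Suc m. z k powr p)"
      by (rule member_le_sum) auto
    then show ?thesis using ii[of "Suc m"] by (simp add: M_def)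
  qed
  have iv: "z m powr q \<le> z m powr p * M powr (q / p - 1)" for m
  proof -
    have "z m powr q = (z m powr p) powr (q / p)"
      using pq by (simp add: powr_powr)
    also have "\<dots> = (z m powr p) * (z m powr p) powr (q / p - 1)"
      using z0[of m] powr_add[of "z m powr p" 1 "q / p - 1"] by simp
    also have "\<dots> \<le> (z m powr p) * M powr (q / p - 1)"
      using pq iii[of m] by (intro mult_left_mono powr_mono2) auto
    finally show ?thesis .
  qed
  have "(\<Sum>m<N. z m powr q) \<le> (\<Sum>m<N. z m powr p * M powr (q / p - 1))"
    by (intro sum_mono iv)
  also have "\<dots> = (\<Sum>m<N. z m powr p) * M powr (q / p - 1)" by (simp add: sum_distrib_right)
  also have "\<dots> \<le> M * M powr (q / p - 1)"
    using ii[of N] by (intro mult_right_mono) (auto simp: M_def)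
  also have "\<dots> = M powr (q / p)"
    using M0 powr_add[of M 1 "q / p - 1"] by simp
  also have "\<dots> = L powr q * S powr (q / p)"
    unfolding M_def using L0 S0 pq by (simp add: powr_mult powr_powr)
  finally show ?thesis unfolding z_def L_def .
qed

lemma holder_set:
  fixes f :: "real \<Rightarrow> real" and D :: "real set" and lam B p :: real
  assumes f: "f \<in> borel_measurable lborel" "\<And>s. f s \<ge> 0" and D: "D \<in> sets lborel"
    and lam: "emeasure lborel D \<le> ennreal lam" "lam > 0" and p: "p \<ge> 1"
    and B: "(\<integral>\<^sup>+ s\<in>D. ennreal (f s powr p) \<partial>lborel) = ennreal B" "B \<ge> 0"
  shows "(\<integral>\<^sup>+ s\<in>D. ennreal (f s) \<partial>lborel) \<le> ennreal (lam powr (1 - 1/p) * B powr (1/p))"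
proof (cases "B = 0")
  note [measurable] = f(1) D
  case True
  have "AE s in lborel. ennreal (f s powr p) * indicator D s = 0"
    using B True f D by (subst nn_integral_0_iff_AE[symmetric]) auto
  then have "AE s in lborel. ennreal (f s) * indicator D s = 0"
    by eventually_elim (use f in \<open>auto split: split_indicator\<close>)
  then have "(\<integral>\<^sup>+ s\<in>D. ennreal (f s) \<partial>lborel) = 0"
  proof -
    have m: "(\<lambda>s. ennreal (f s) * indicator D s) \<in> borel_measurable lborel"
      using f(1) D by measurable
    have "AE s in lborel. ennreal (f s) * indicator D s = 0" by fact
    then show ?thesis using nn_integral_0_iff_AE[OF m] by blast
  qed
  then show ?thesis by simp
next
  note [measurable] = f(1) D
  case False
  then have Bp: "B > 0" using B by simp
  define c where "c = (B / lam) powr (1/p)"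
  have cp: "c > 0" using Bp lam by (simp add: c_def)
  have cpp: "c powr p = B / lam" using Bp lam p by (simp add: c_def powr_powr)
  have "(\<integral>\<^sup>+ s\<in>D. ennreal (f s * c powr (p - 1)) \<partial>lborel)
      \<le> (\<integral>\<^sup>+ s\<in>D. ennreal (f s powr p / p + (1 - 1/p) * c powr p) \<partial>lborel)"
  proof (rule nn_integral_mono)
    fix s
    have "f s * c powr (p - 1) \<le> f s powr p / p + (1 - 1/p) * c powr p" by (rule key_ineq[OF p f(2) cp])
    then show "ennreal (f s * c powr (p - 1)) * indicator D s \<le> ennreal (f s powr p / p + (1 - 1/p) * c powr p) * indicator D s"
      by (intro mult_right_mono ennreal_leI) auto
  qed
  also have "\<dots> = (\<integral>\<^sup>+ s. ennreal (1/p) * (ennreal (f s powr p) * indicator D s)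
       + ennreal ((1 - 1/p) * c powr p) * indicator D s \<partial>lborel)"
  proof (rule nn_integral_cong)
    fix s
    have a: "0 \<le> f s powr p / p" "0 \<le> (1 - 1/p) * c powr p" using p cp by auto
    have "ennreal (f s powr p / p + (1 - 1/p) * c powr p) = ennreal (1/p) * ennreal (f s powr p) + ennreal ((1 - 1/p) * c powr p)"
    proof -
      have "ennreal (1/p) * ennreal (f s powr p) = ennreal (f s powr p / p)"
        using p by (subst ennreal_mult[symmetric]) auto
      then show ?thesis using a by simp
    qed
    then show "ennreal (f s powr p / p + (1 - 1/p) * c powr p) * indicator D s = ennreal (1/p) * (ennreal (f s powr p) * indicator D s)
       + ennreal ((1 - 1/p) * c powr p) * indicator D s"
      by (simp add: distrib_right mult.assoc)
  qed
  also have "\<dots> = ennreal (1/p) * ennreal B + ennreal ((1 - 1/p) * c powr p) * emeasure lborel D"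
  proof -
    have "(\<integral>\<^sup>+ s. ennreal (1/p) * (ennreal (f s powr p) * indicator D s)
       + ennreal ((1 - 1/p) * c powr p) * indicator D s \<partial>lborel) =
       (\<integral>\<^sup>+ s. ennreal (1/p) * (ennreal (f s powr p) * indicator D s) \<partial>lborel) +
       (\<integral>\<^sup>+ s. ennreal ((1 - 1/p) * c powr p) * indicator D s \<partial>lborel)"
      by (rule nn_integral_add; measurable)
    also have "(\<integral>\<^sup>+ s. ennreal (1/p) * (ennreal (f s powr p) * indicator D s) \<partial>lborel) = ennreal (1/p) * ennreal B"
    proof -
      have "(\<lambda>s. ennreal (f s powr p) * indicator D s) \<in> borel_measurable lborel" by measurable
      from nn_integral_cmult[OF this, of "ennreal (1/p)"] show ?thesis using B(1) by simp
    qed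
    also have "(\<integral>\<^sup>+ s. ennreal ((1 - 1/p) * c powr p) * indicator D s \<partial>lborel) = ennreal ((1 - 1/p) * c powr p) * emeasure lborel D"
      by (rule nn_integral_cmult_indicator) (rule D)
    finally show ?thesis .
  qed
  also have "\<dots> \<le> ennreal (1/p) * ennreal B + ennreal ((1 - 1/p) * c powr p) * ennreal lam"
    using lam by (intro add_left_mono mult_left_mono) auto
  also have "\<dots> = ennreal (B/p + (1 - 1/p) * c powr p * lam)"
  proof -
    have e1: "ennreal (1/p) * ennreal B = ennreal (B/p)" using p Bp by (subst ennreal_mult[symmetric]) auto
    have e2: "ennreal ((1 - 1/p) * c powr p) * ennreal lam = ennreal ((1 - 1/p) * c powr p * lam)"
      using p lam by (subst ennreal_mult[symmetric]) auto
    have "0 \<le> (1 - 1/p) * c powr p * lam" using p lam by auto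
    then show ?thesis unfolding e1 e2 using Bp p by (subst ennreal_plus) auto
  qed
  also have "B/p + (1 - 1/p) * c powr p * lam = B"
    using lam cpp by (simp add: field_simps)
  finally have 0: "(\<integral>\<^sup>+ s\<in>D. ennreal (f s * c powr (p - 1)) \<partial>lborel) \<le> ennreal B" .
  have "(\<integral>\<^sup>+ s\<in>D. ennreal (f s * c powr (p - 1)) \<partial>lborel) = (\<integral>\<^sup>+ s. ennreal (c powr (p - 1)) * (ennreal (f s) * indicator D s) \<partial>lborel)"
  proof (rule nn_integral_cong)
    fix s
    have "ennreal (f s * c powr (p - 1)) = ennreal (c powr (p - 1)) * ennreal (f s)"
      using f(2)[of s] by (subst ennreal_mult) (auto simp: mult.commute)
    then show "ennreal (f s * c powr (p - 1)) * indicator D s = ennreal (c powr (p - 1)) * (ennreal (f s) * indicator D s)"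
      by (simp add: mult.assoc)
  qed
  also have "\<dots> = ennreal (c powr (p - 1)) * (\<integral>\<^sup>+ s\<in>D. ennreal (f s) \<partial>lborel)"
    by (rule nn_integral_cmult) measurable
  finally have 1: "ennreal (c powr (p - 1)) * (\<integral>\<^sup>+ s\<in>D. ennreal (f s) \<partial>lborel) \<le> ennreal B"
    using 0 by simp
  define k where "k = c powr (p - 1)"
  have kp: "k > 0" using cp by (simp add: k_def)
  have "(\<integral>\<^sup>+ s\<in>D. ennreal (f s) \<partial>lborel) = ennreal (1/k) * (ennreal k * (\<integral>\<^sup>+ s\<in>D. ennreal (f s) \<partial>lborel))"
  proof -
    have "ennreal (1/k) * ennreal k = 1" using kp by (subst ennreal_mult[symmetric]) auto
    then show ?thesis by (simp add: mult.assoc[symmetric])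
  qed
  also have "\<dots> \<le> ennreal (1/k) * ennreal B"
    using 1 by (intro mult_left_mono) (auto simp: k_def)
  also have "\<dots> = ennreal (B / k)" using kp Bp by (subst ennreal_mult[symmetric]) auto
  also have "B / k = lam powr (1 - 1/p) * B powr (1/p)"
  proof -
    have "k = B powr (1 - 1/p) / lam powr (1 - 1/p)"
      unfolding k_def c_def using Bp lam p by (simp add: powr_powr powr_divide field_simps)
    moreover have "B = B powr (1 - 1/p) * B powr (1/p)"
      using Bp by (simp flip: powr_add)
    ultimately have "B = k * (lam powr (1 - 1/p) * B powr (1/p))" using lam by simp
    then show ?thesis using kp by (simp add: field_simps)
  qed
  finally show ?thesis .
qed

lemma nbhd_open: "open {r::real. \<exists>t\<in>E. \<bar>r - t\<bar> < \<delta>}"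
proof -
  have "{r::real. \<exists>t\<in>E. \<bar>r - t\<bar> < \<delta>} = (\<Union>t\<in>E. ball t \<delta>)"
    by (auto simp: dist_real_def abs_minus_commute)
  then show ?thesis by auto
qed

lemma cover_exists:
  fixes E :: "real set" and \<delta> :: real
  assumes "\<delta> > 0" "E \<subseteq> {1..2}"
  shows "\<exists>a :: nat \<Rightarrow> real. E \<subseteq> (\<Union>i<nat \<lceil>1/\<delta>\<rceil> + 1. {a i .. a i + \<delta>})"
proof (rule exI[of _ "\<lambda>i. 1 + real i * \<delta>"], rule subsetI)
  fix x assume "x \<in> E"
  then have x: "1 \<le> x" "x \<le> 2" using assms by auto
  define i where "i = nat \<lfloor>(x - 1) / \<delta>\<rfloor>"
  have fl0: "\<lfloor>(x - 1) / \<delta>\<rfloor> \<ge> 0" using x assms by auto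
  have ii: "real i = of_int \<lfloor>(x - 1) / \<delta>\<rfloor>" using fl0 by (simp add: i_def)
  have "\<delta> * of_int \<lfloor>(x - 1) / \<delta>\<rfloor> \<le> \<delta> * ((x - 1) / \<delta>)"
    by (rule mult_left_mono) (use assms in auto)
  then have lo: "1 + real i * \<delta> \<le> x" using assms ii by (simp add: mult.commute)
  have "\<delta> * ((x - 1) / \<delta>) \<le> \<delta> * (of_int \<lfloor>(x - 1) / \<delta>\<rfloor> + 1)"
    by (rule mult_left_mono) (use assms in linarith)+
  moreover have "\<delta> * ((x - 1) / \<delta>) = x - 1" using assms by simp
  ultimately have hi: "x \<le> 1 + real i * \<delta> + \<delta>" using ii by (simp add: algebra_simps)
  have "(x - 1) / \<delta> \<le> 1 / \<delta>" using x assms by (simp add: divide_right_mono)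
  then have "\<lfloor>(x - 1) / \<delta>\<rfloor> \<le> \<lceil>1/\<delta>\<rceil>" by (meson floor_le_ceiling floor_mono order_trans)
  then have ilt: "i < nat \<lceil>1/\<delta>\<rceil> + 1" unfolding i_def by linarith
  show "x \<in> (\<Union>i<nat \<lceil>1/\<delta>\<rceil> + 1. {(\<lambda>i. 1 + real i * \<delta>) i .. (\<lambda>i. 1 + real i * \<delta>) i + \<delta>})"
  proof (rule UN_I[of i])
    show "i \<in> {..<nat \<lceil>1/\<delta>\<rceil> + 1}" using ilt by simp
    show "x \<in> {(\<lambda>i. 1 + real i * \<delta>) i .. (\<lambda>i. 1 + real i * \<delta>) i + \<delta>}" using lo hi by simp
  qed
qed

lemma nbhd_measure:
  fixes E :: "real set" and \<delta> :: real
  assumes "\<delta> > 0" "E \<subseteq> {1..2}"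
  shows "emeasure lborel {r. \<exists>t\<in>E. \<bar>r - t\<bar> < \<delta>} \<le> ennreal (3 * \<delta> * real (covering_number E \<delta>))"
proof -
  define N where "N = covering_number E \<delta>"
  obtain a0 :: "nat \<Rightarrow> real" where a0: "E \<subseteq> (\<Union>i<nat \<lceil>1/\<delta>\<rceil> + 1. {a0 i .. a0 i + \<delta>})"
    using cover_exists[OF assms] by (elim exE)
  have ex: "\<exists>(n::nat) (a::nat \<Rightarrow> real). E \<subseteq> (\<Union>i<n. {a i .. a i + \<delta>})"
    by (rule exI[of _ "nat \<lceil>1/\<delta>\<rceil> + 1"], rule exI[of _ a0], rule a0)
  have "\<exists>a :: nat \<Rightarrow> real. E \<subseteq> (\<Union>i<N. {a i .. a i + \<delta>})"
    unfolding N_def covering_number_def by (rule LeastI_ex) (rule ex)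
  then obtain a :: "nat \<Rightarrow> real" where a: "E \<subseteq> (\<Union>i<N. {a i .. a i + \<delta>})" by blast
  have sub: "{r. \<exists>t\<in>E. \<bar>r - t\<bar> < \<delta>} \<subseteq> (\<Union>i<N. {a i - \<delta> <..< a i + 2 * \<delta>})"
  proof
    fix r assume "r \<in> {r. \<exists>t\<in>E. \<bar>r - t\<bar> < \<delta>}"
    then obtain t where t: "t \<in> E" "\<bar>r - t\<bar> < \<delta>" by auto
    have "t \<in> (\<Union>i<N. {a i .. a i + \<delta>})" using a t(1) by (rule subsetD)
    then obtain i where i: "i \<in> {..<N}" "t \<in> {a i .. a i + \<delta>}" by (rule UN_E)
    show "r \<in> (\<Union>i<N. {a i - \<delta> <..< a i + 2 * \<delta>})"
    proof (rule UN_I[OF i(1)])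
      show "r \<in> {a i - \<delta> <..< a i + 2 * \<delta>}" using i(2) t(2) by (simp add: abs_less_iff)
    qed
  qed
  have "emeasure lborel {r. \<exists>t\<in>E. \<bar>r - t\<bar> < \<delta>} \<le> emeasure lborel (\<Union>i<N. {a i - \<delta> <..< a i + 2 * \<delta>})"
    by (rule emeasure_mono[OF sub]) auto
  also have "\<dots> \<le> (\<Sum>i<N. emeasure lborel {a i - \<delta> <..< a i + 2 * \<delta>})"
    by (rule emeasure_subadditive_finite) auto
  also have "\<dots> = (\<Sum>i<N. ennreal (3 * \<delta>))" using assms by simp
  also have "\<dots> = ennreal (3 * \<delta> * real N)"
    using assms by (simp add: ennreal_of_nat_eq_real_of_nat ennreal_mult'' mult.commute)
  finally show ?thesis unfolding N_def .
qed

lemma pow_half_powr: "((1/2::real)^m) powr x = ((1/2) powr x)^m"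
proof -
  have "((1/2::real)^m) = (1/2) powr (real m)" by (simp add: powr_realpow)
  then show ?thesis by (simp add: powr_powr powr_power mult.commute)
qed

definition Wset :: "real set \<Rightarrow> nat \<Rightarrow> real set" where
  "Wset E m = {r \<in> {2/3<..<4}. \<exists>t\<in>E. \<bar>r - t\<bar> < 4 * (1/2)^m}"

lemma Wset_sets: "Wset E m \<in> sets lborel"
proof -
  have "Wset E m = {2/3<..<4} \<inter> {r. \<exists>t\<in>E. \<bar>r - t\<bar> < 4 * (1/2)^m}"
    unfolding Wset_def by auto
  moreover have "open ({2/3<..<4::real} \<inter> {r. \<exists>t\<in>E. \<bar>r - t\<bar> < 4 * (1/2)^m})"
    by (intro open_Int nbhd_open) auto
  ultimately show ?thesis by (simp add: borel_open)
qed

lemma Wset_mono: "Wset E (Suc m) \<subseteq> Wset E m"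
proof
  fix r assume "r \<in> Wset E (Suc m)"
  then obtain t where t: "t \<in> E" "\<bar>r - t\<bar> < 4 * (1/2)^Suc m" and r: "r \<in> {2/3<..<4}"
    unfolding Wset_def by blast
  have "\<bar>r - t\<bar> < 4 * (1/2)^m" using t(2) by simp
  then show "r \<in> Wset E m" using t(1) r unfolding Wset_def by blast
qed

lemma Wset_bound:
  fixes E :: "real set" and \<beta> C :: real
  assumes E: "E \<subseteq> {1..2}" and \<beta>: "0 \<le> \<beta>" "\<beta> < 1"
    and cov: "\<And>\<delta>. 0 < \<delta> \<Longrightarrow> \<delta> < 1 \<Longrightarrow> \<delta> powr \<beta> * real (covering_number E \<delta>) \<le> C"
  shows "emeasure lborel (Wset E m) \<le> ennreal ((12 * max C 0 + 14) * ((1/2) powr (1 - \<beta>))^m)"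
proof -
  define \<theta> where "\<theta> = (1/2::real) powr (1 - \<beta>)"
  define \<delta> where "\<delta> = 4 * (1/2::real)^m"
  have \<delta>0: "\<delta> > 0" by (simp add: \<delta>_def)
  have th_half: "\<theta> \<ge> 1/2"
  proof -
    have "(1/2::real) powr 1 \<le> (1/2) powr (1 - \<beta>)" using \<beta> by (intro powr_mono') auto
    then show ?thesis by (simp add: \<theta>_def)
  qed
  have thmm: "\<theta>^m \<ge> (1/2)^m" using th_half by (intro power_mono) auto
  have thm0: "\<theta>^m \<ge> 0" using th_half by simp
  show ?thesis
  proof (cases "\<delta> < 1")
    case True
    define N where "N = real (covering_number E \<delta>)"
    have N0: "N \<ge> 0" by (simp add: N_def)
    have "Wset E m \<subseteq> {r. \<exists>t\<in>E. \<bar>r - t\<bar> < \<delta>}" unfolding Wset_def \<delta>_def by auto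
    then have "emeasure lborel (Wset E m) \<le> emeasure lborel {r. \<exists>t\<in>E. \<bar>r - t\<bar> < \<delta>}"
      by (rule emeasure_mono) (simp add: borel_open nbhd_open)
    also have "\<dots> \<le> ennreal (3 * \<delta> * N)" unfolding N_def by (rule nbhd_measure[OF \<delta>0 E])
    also have "3 * \<delta> * N \<le> (12 * max C 0 + 14) * \<theta>^m"
    proof -
      have "\<delta> = \<delta> powr (1 - \<beta>) * \<delta> powr \<beta>" using \<delta>0 by (simp flip: powr_add)
      moreover have "\<delta> powr (1 - \<beta>) = 4 powr (1 - \<beta>) * \<theta>^m"
        unfolding \<delta>_def \<theta>_def by (simp add: powr_mult pow_half_powr)
      moreover have "4 powr (1 - \<beta>) \<le> (4::real)" using \<beta> powr_mono[of "1 - \<beta>" 1 4] by simp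
      moreover have "\<delta> powr \<beta> * N \<le> max C 0" using cov[OF \<delta>0 True] by (simp add: N_def)
      ultimately have "3 * \<delta> * N \<le> 3 * (4 * \<theta>^m) * max C 0"
      proof -
        assume h: "\<delta> = \<delta> powr (1 - \<beta>) * \<delta> powr \<beta>" "\<delta> powr (1 - \<beta>) = 4 powr (1 - \<beta>) * \<theta>^m"
          "4 powr (1 - \<beta>) \<le> (4::real)" "\<delta> powr \<beta> * N \<le> max C 0"
        have "3 * \<delta> * N = 3 * (4 powr (1 - \<beta>) * \<theta>^m) * (\<delta> powr \<beta> * N)"
          using h(1,2) by (metis mult.assoc mult.commute)
        also have "\<dots> \<le> 3 * (4 * \<theta>^m) * max C 0"
          using h(3,4) thm0 N0 by (intro mult_mono mult_left_mono mult_right_mono) auto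
        finally show ?thesis .
      qed
      also have "\<dots> \<le> (12 * max C 0 + 14) * \<theta>^m" using thm0 by (simp add: algebra_simps)
      finally show ?thesis .
    qed
    finally show ?thesis unfolding \<theta>_def by (simp add: ennreal_leI)
  next
    case False
    have "emeasure lborel (Wset E m) \<le> emeasure lborel {2/3<..<4::real}"
      by (rule emeasure_mono) (auto simp: Wset_def)
    also have "\<dots> = ennreal (10/3)" by simp
    also have "10/3 \<le> (12 * max C 0 + 14) * \<theta>^m"
    proof -
      have "(1/2::real)^m \<ge> 1/4" using False by (simp add: \<delta>_def)
      then have "\<theta>^m \<ge> 1/4" using thmm by linarith
      then have "14 * \<theta>^m \<le> (12 * max C 0 + 14) * \<theta>^m" using thm0 by (intro mult_right_mono) auto
      then show ?thesis using \<open>\<theta>^m \<ge> 1/4\<close> by linarith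
    qed
    then have "ennreal (10/3) \<le> ennreal ((12 * max C 0 + 14) * \<theta>^m)" by (rule ennreal_leI)
    finally show ?thesis unfolding \<theta>_def .
  qed
qed

lemma Wset_null:
  fixes E :: "real set" and \<beta> C :: real
  assumes E: "E \<subseteq> {1..2}" and \<beta>: "0 \<le> \<beta>" "\<beta> < 1"
    and cov: "\<And>\<delta>. 0 < \<delta> \<Longrightarrow> \<delta> < 1 \<Longrightarrow> \<delta> powr \<beta> * real (covering_number E \<delta>) \<le> C"
  shows "(\<Inter>m. Wset E m) \<in> null_sets lborel"
proof -
  define A where "A = 12 * max C 0 + 14"
  define \<theta> where "\<theta> = (1/2::real) powr (1 - \<beta>)"
  have A0: "A > 0" by (simp add: A_def)
  have th1: "\<theta> < 1" unfolding \<theta>_def using \<beta> powr_less_mono'[of "1/2::real" 0 "1 - \<beta>"] by simp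
  have Zs: "(\<Inter>m. Wset E m) \<in> sets lborel"
  proof -
    note [measurable] = Wset_sets
    show ?thesis by measurable
  qed
  have "emeasure lborel (\<Inter>m. Wset E m) \<le> 0 + ennreal e" if e: "e > 0" for e
  proof -
    obtain m where m: "\<theta>^m < e / A" using real_arch_pow_inv[of "e / A" \<theta>] th1 e A0 by auto
    have "emeasure lborel (\<Inter>m. Wset E m) \<le> emeasure lborel (Wset E m)"
      by (rule emeasure_mono) (blast, rule Wset_sets)
    also have "\<dots> \<le> ennreal (A * \<theta>^m)" unfolding A_def \<theta>_def by (rule Wset_bound[OF E \<beta> cov])
    also have "A * \<theta>^m \<le> e" using m A0 by (simp add: field_simps)
    then have "ennreal (A * \<theta>^m) \<le> ennreal e" by (rule ennreal_leI)
    finally show ?thesis by simp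
  qed
  then have "emeasure lborel (\<Inter>m. Wset E m) \<le> 0" by (rule ennreal_le_epsilon)
  then show ?thesis using Zs by (simp add: null_sets_def)
qed

definition Dset :: "nat \<Rightarrow> real set" where
  "Dset j = (if j = 0 then {1..6} else {(1/2)^j ..< 2 * (1/2)^j})"

lemma Dset_sets: "Dset j \<in> sets lborel"
  unfolding Dset_def by auto

lemma Dset_measure: "emeasure lborel (Dset j) \<le> ennreal (5 * (1/2)^j)"
proof (cases "j = 0")
  case True then show ?thesis by (simp add: Dset_def)
next
  case False
  then have "emeasure lborel (Dset j) = ennreal ((1/2)^j)" by (simp add: Dset_def)
  also have "\<dots> \<le> ennreal (5 * (1/2)^j)" by (intro ennreal_leI) auto
  finally show ?thesis .
qed

lemma Dset_lower: "s \<in> Dset j \<Longrightarrow> (1/2)^j \<le> s"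
  unfolding Dset_def by (auto split: if_splits)

lemma Dset_disj: "disjoint_family Dset"
unfolding disjoint_family_on_def
proof (intro ballI impI)
  fix i j :: nat assume "i \<noteq> j"
  have *: "Dset k \<inter> Dset l = {}" if "k < l" for k l :: nat
  proof (cases "k = 0")
    case True
    have "2 * (1/2::real)^l \<le> 1"
      using that True power_decreasing[of 1 l "1/2::real"] by (simp add: power_Suc[symmetric] del: power_Suc)
    then show ?thesis using that True by (auto simp: Dset_def)
  next
    case False
    have "(1/2::real)^l \<le> (1/2)^Suc k" using that by (intro power_decreasing) auto
    then have "2 * (1/2::real)^l \<le> (1/2)^k" by simp
    then show ?thesis using that False by (auto simp: Dset_def)
  qed
  show "Dset i \<inter> Dset j = {}"
    using *[of i j] *[of j i] \<open>i \<noteq> j\<close> by (cases "i < j") (auto simp: Int_commute)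
qed

lemma Dset_pos: "Dset j \<subseteq> {0<..}"
proof
  fix s assume "s \<in> Dset j"
  then have "(1/2)^j \<le> s" by (rule Dset_lower)
  moreover have "(0::real) < (1/2)^j" by simp
  ultimately have "0 < s" by linarith
  then show "s \<in> {0<..}" by simp
qed

lemma epow_zero: "q > 0 \<Longrightarrow> epow 0 q = 0"
  by (simp add: epow_def)

lemma epow_ennreal: "y \<ge> 0 \<Longrightarrow> epow (ennreal y) q = ennreal (y powr q)"
  by (simp add: epow_def)

lemma epow_mono_ennreal:
  assumes "x \<le> ennreal y" "y \<ge> 0" "q \<ge> 0"
  shows "epow x q \<le> ennreal (y powr q)"
proof -
  have "x \<noteq> \<infinity>" using assms(1) by (auto simp: top_unique)
  then obtain x' where x': "x = ennreal x'" "x' \<ge> 0" by (cases x rule: ennreal_cases) auto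
  then have "x' \<le> y" using assms by simp
  then show ?thesis using x' assms by (simp add: epow_def ennreal_leI powr_mono2)
qed

lemma maxop_zero:
  assumes "r \<notin> Wset E 0"
  shows "maxop E d p g r = 0"
proof (cases "r \<in> {2/3<..<4}")
  case False then show ?thesis unfolding maxop_def if_not_P[OF False] by simp
next
  case True
  have eq: "{t \<in> E. r/2 < t \<and> t < 3*r/2} = {}"
  proof (rule ccontr)
    assume "{t \<in> E. r/2 < t \<and> t < 3*r/2} \<noteq> {}"
    then obtain t where t: "t \<in> E" "r/2 < t" "t < 3*r/2" by blast
    then have "\<bar>r - t\<bar> < 4 * (1/2)^0" using True by (simp add: abs_less_iff)
    then have "r \<in> Wset E 0" using t(1) True unfolding Wset_def by blast
    then show False using assms by simp
  qed
  show ?thesis unfolding maxop_def if_P[OF True] eq by (simp add: bot_ennreal)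
qed

lemma maxop_le_T:
  assumes E: "E \<subseteq> {1..2}" and r: "r \<in> Wset E m" "r \<notin> Wset E (Suc m)"
  shows "maxop E d p g r \<le> (\<integral>\<^sup>+ s\<in>{(1/2)^m..6}. ennreal (s powr ((real d - 1) * (1 - 1/p) - 1) * \<bar>g s\<bar>) \<partial>lborel)"
proof -
  have rI: "r \<in> {2/3<..<4}" using r(1) unfolding Wset_def by blast
  show ?thesis unfolding maxop_def using rI
  proof (simp only: if_True, intro SUP_least)
    fix t assume "t \<in> {t \<in> E. r/2 < t \<and> t < 3*r/2}"
    then have t: "t \<in> E" by blast
    have t12: "1 \<le> t" "t \<le> 2" using t E by auto
    have "\<not> \<bar>r - t\<bar> < 4 * (1/2)^Suc m" using r(2) rI t unfolding Wset_def by blast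
    then have lo: "(1/2)^m \<le> \<bar>r - t\<bar>" by simp
    have hi: "r + t \<le> 6" using rI t12 by simp
    show "(\<integral>\<^sup>+ s\<in>{\<bar>r - t\<bar>..r + t}. ennreal (s powr ((real d - 1) * (1 - 1/p) - 1) * \<bar>g s\<bar>) \<partial>lborel)
        \<le> (\<integral>\<^sup>+ s\<in>{(1/2)^m..6}. ennreal (s powr ((real d - 1) * (1 - 1/p) - 1) * \<bar>g s\<bar>) \<partial>lborel)"
    proof (rule nn_integral_mono)
      fix s
      have "indicator {\<bar>r - t\<bar>..r + t} s \<le> (indicator {(1/2)^m..6} s :: ennreal)"
        using lo hi by (auto split: split_indicator)
      then show "ennreal (s powr ((real d - 1) * (1 - 1/p) - 1) * \<bar>g s\<bar>) * indicator {\<bar>r - t\<bar>..r + t} s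
          \<le> ennreal (s powr ((real d - 1) * (1 - 1/p) - 1) * \<bar>g s\<bar>) * indicator {(1/2)^m..6} s"
        by (rule mult_left_mono) simp
    qed
  qed
qed

lemma a_bound:
  fixes f :: "real \<Rightarrow> real" and \<alpha> p \<epsilon> b :: real
  assumes f: "f \<in> borel_measurable lborel" "\<And>s. f s \<ge> 0" and p: "p \<ge> 1"
    and ae: "\<alpha> + 1 - 1/p = -\<epsilon>" "\<alpha> \<le> 0"
    and b: "(\<integral>\<^sup>+ s\<in>Dset j. ennreal (f s powr p) \<partial>lborel) = ennreal b" "b \<ge> 0"
  shows "(\<integral>\<^sup>+ s\<in>Dset j. ennreal (s powr \<alpha> * f s) \<partial>lborel)
          \<le> ennreal (5 powr (1 - 1/p) * b powr (1/p) / ((1/2) powr \<epsilon>)^j)"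
proof -
  note [measurable] = f(1) Dset_sets
  define h where "h = ((1/2::real)^j) powr \<alpha>"
  have h0: "h \<ge> 0" by (simp add: h_def)
  have "(\<integral>\<^sup>+ s\<in>Dset j. ennreal (s powr \<alpha> * f s) \<partial>lborel)
      \<le> (\<integral>\<^sup>+ s. ennreal h * (ennreal (f s) * indicator (Dset j) s) \<partial>lborel)"
  proof (rule nn_integral_mono)
    fix s
    show "ennreal (s powr \<alpha> * f s) * indicator (Dset j) s \<le> ennreal h * (ennreal (f s) * indicator (Dset j) s)"
    proof (cases "s \<in> Dset j")
      case True
      have lo: "(1/2)^j \<le> s" using True by (rule Dset_lower)
      have "s powr \<alpha> \<le> h" unfolding h_def by (rule powr_mono2'[OF ae(2) _ lo]) simp
      then have "s powr \<alpha> * f s \<le> h * f s" using f(2)[of s] by (rule mult_right_mono)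
      then have "ennreal (s powr \<alpha> * f s) \<le> ennreal (h * f s)" by (rule ennreal_leI)
      also have "\<dots> = ennreal h * ennreal (f s)" using h0 f(2)[of s] by (rule ennreal_mult)
      finally show ?thesis using True by simp
    qed simp
  qed
  also have "\<dots> = ennreal h * (\<integral>\<^sup>+ s\<in>Dset j. ennreal (f s) \<partial>lborel)"
    by (rule nn_integral_cmult) measurable
  also have "\<dots> \<le> ennreal h * ennreal ((5 * (1/2)^j) powr (1 - 1/p) * b powr (1/p))"
    by (intro mult_left_mono holder_set[OF f Dset_sets Dset_measure _ p b]) auto
  also have "\<dots> = ennreal (h * ((5 * (1/2)^j) powr (1 - 1/p) * b powr (1/p)))"
    using h0 by (subst ennreal_mult) auto
  also have "h * ((5 * (1/2)^j) powr (1 - 1/p) * b powr (1/p)) = 5 powr (1 - 1/p) * b powr (1/p) / ((1/2) powr \<epsilon>)^j"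
  proof -
    have e1: "(5 * (1/2::real)^j) powr (1 - 1/p) = 5 powr (1 - 1/p) * ((1/2)^j) powr (1 - 1/p)"
      by (rule powr_mult)
    have e2: "h * ((1/2::real)^j) powr (1 - 1/p) = ((1/2)^j) powr (-\<epsilon>)"
    proof -
      have "\<alpha> + (1 - 1/p) = -\<epsilon>" using ae(1) by simp
      then show ?thesis unfolding h_def by (simp only: powr_add[symmetric])
    qed
    have e3: "((1/2::real)^j) powr (-\<epsilon>) = 1 / ((1/2) powr \<epsilon>)^j"
    proof -
      have "((1/2::real)^j) powr (-\<epsilon>) = inverse (((1/2)^j) powr \<epsilon>)" by (rule powr_minus)
      also have "((1/2::real)^j) powr \<epsilon> = ((1/2) powr \<epsilon>)^j" by (rule pow_half_powr)
      finally show ?thesis by (simp only: inverse_eq_divide)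
    qed
    have "h * ((5 * (1/2)^j) powr (1 - 1/p) * b powr (1/p)) = 5 powr (1 - 1/p) * b powr (1/p) * (h * ((1/2::real)^j) powr (1 - 1/p))"
      unfolding e1 by (simp only: mult_ac)
    also have "\<dots> = 5 powr (1 - 1/p) * b powr (1/p) * (1 / ((1/2) powr \<epsilon>)^j)"
      unfolding e2 e3 ..
    also have "\<dots> = 5 powr (1 - 1/p) * b powr (1/p) / ((1/2) powr \<epsilon>)^j" by simp
    finally show ?thesis .
  qed
  finally show ?thesis .
qed

lemma T_bound:
  fixes F :: "real \<Rightarrow> real" and c :: "nat \<Rightarrow> real"
  assumes F: "F \<in> borel_measurable lborel" "\<And>s. F s \<ge> 0"
    and c: "\<And>j. (\<integral>\<^sup>+ s\<in>Dset j. ennreal (F s) \<partial>lborel) \<le> ennreal (c j)" "\<And>j. c j \<ge> 0"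
  shows "(\<integral>\<^sup>+ s\<in>{(1/2)^m..6}. ennreal (F s) \<partial>lborel) \<le> ennreal (\<Sum>j\<le>m. c j)"
proof (induction m)
  case 0
  have "{(1/2::real)^0..6} = Dset 0" by (simp add: Dset_def)
  then show ?case using c(1)[of 0] by simp
next
  case (Suc m)
  note [measurable] = F(1) Dset_sets
  have "(\<integral>\<^sup>+ s\<in>{(1/2)^Suc m..6}. ennreal (F s) \<partial>lborel)
      \<le> (\<integral>\<^sup>+ s. ennreal (F s) * indicator {(1/2)^m..6} s + ennreal (F s) * indicator (Dset (Suc m)) s \<partial>lborel)"
  proof (rule nn_integral_mono)
    fix s
    have ind: "indicator {(1/2)^Suc m..6} s \<le> (indicator {(1/2)^m..6} s + indicator (Dset (Suc m)) s :: ennreal)"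
    proof (cases "s \<in> {(1/2)^Suc m..6}")
      case True
      have "s \<in> {(1/2)^m..6} \<or> s \<in> Dset (Suc m)"
      proof (cases "s < (1/2)^m")
        case True2: True
        have "2 * (1/2::real)^Suc m = (1/2)^m" by simp
        then have "Dset (Suc m) = {(1/2)^Suc m ..< (1/2)^m}" unfolding Dset_def by simp
        moreover have "(1/2)^Suc m \<le> s" using True by simp
        ultimately have "s \<in> Dset (Suc m)" using True2 by simp
        then show ?thesis by blast
      next
        case False
        then show ?thesis using True by simp
      qed
      then show ?thesis
      proof
        assume "s \<in> {(1/2)^m..6}"
        then have i1: "indicator {(1/2)^m..6} s = (1::ennreal)" by simp
        have a: "indicator {(1/2)^Suc m..6} s \<le> (1::ennreal)" by (simp split: split_indicator)
        have b: "(1::ennreal) \<le> indicator {(1/2)^m..6} s + indicator (Dset (Suc m)) s"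
          unfolding i1 by (rule add_increasing2) simp_all
        from a b show ?thesis by (rule order_trans)
      next
        assume "s \<in> Dset (Suc m)"
        then have i1: "indicator (Dset (Suc m)) s = (1::ennreal)" by simp
        have a: "indicator {(1/2)^Suc m..6} s \<le> (1::ennreal)" by (simp split: split_indicator)
        have b: "(1::ennreal) \<le> indicator {(1/2)^m..6} s + indicator (Dset (Suc m)) s"
          unfolding i1 by (rule add_increasing) simp_all
        from a b show ?thesis by (rule order_trans)
      qed
    qed simp
    show "ennreal (F s) * indicator {(1/2)^Suc m..6} s
        \<le> ennreal (F s) * indicator {(1/2)^m..6} s + ennreal (F s) * indicator (Dset (Suc m)) s"
      using mult_left_mono[OF ind, of "ennreal (F s)"] by (simp add: distrib_left)
  qed
  also have "\<dots> = (\<integral>\<^sup>+ s\<in>{(1/2)^m..6}. ennreal (F s) \<partial>lborel) + (\<integral>\<^sup>+ s\<in>Dset (Suc m). ennreal (F s) \<partial>lborel)"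
    by (rule nn_integral_add; measurable)
  also have "\<dots> \<le> ennreal (\<Sum>j\<le>m. c j) + ennreal (c (Suc m))"
    by (intro add_mono Suc.IH c(1))
  also have "\<dots> = ennreal (\<Sum>j\<le>Suc m. c j)"
  proof -
    have "0 \<le> (\<Sum>j\<le>m. c j)" using c(2) by (intro sum_nonneg) auto
    then have "ennreal (\<Sum>j\<le>m. c j) + ennreal (c (Suc m)) = ennreal ((\<Sum>j\<le>m. c j) + c (Suc m))"
      using c(2)[of "Suc m"] by (rule ennreal_plus[symmetric])
    then show ?thesis by simp
  qed
  finally show ?case .
qed

lemma b_sum:
  fixes F :: "real \<Rightarrow> real"
  assumes F: "F \<in> borel_measurable lborel"
  shows "(\<Sum>j<n. \<integral>\<^sup>+ s\<in>Dset j. ennreal (F s) \<partial>lborel) \<le> (\<integral>\<^sup>+ s\<in>{0<..}. ennreal (F s) \<partial>lborel)"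
proof -
  note [measurable] = F Dset_sets
  have "(\<Sum>j<n. \<integral>\<^sup>+ s\<in>Dset j. ennreal (F s) \<partial>lborel) = (\<integral>\<^sup>+ s. (\<Sum>j<n. ennreal (F s) * indicator (Dset j) s) \<partial>lborel)"
    by (rule nn_integral_sum[symmetric]) measurable
  also have "\<dots> \<le> (\<integral>\<^sup>+ s\<in>{0<..}. ennreal (F s) \<partial>lborel)"
  proof (rule nn_integral_mono)
    fix s
    have "(\<Sum>j<n. indicator (Dset j) s :: ennreal) \<le> (\<Sum>j. indicator (Dset j) s)"
      by (rule sum_le_suminf) auto
    also have "\<dots> = indicator (\<Union>j. Dset j) s" by (rule suminf_indicator[OF Dset_disj])
    also have "\<dots> \<le> indicator {0<..} s"
    proof (cases "s \<in> (\<Union>j. Dset j)")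
      case True
      then obtain j where "s \<in> Dset j" by blast
      then have "s \<in> {0<..}" using Dset_pos by blast
      then show ?thesis using True by (simp only: indicator_simps)
    qed simp
    finally have "(\<Sum>j<n. indicator (Dset j) s :: ennreal) \<le> indicator {0<..} s" .
    then show "(\<Sum>j<n. ennreal (F s) * indicator (Dset j) s) \<le> ennreal (F s) * indicator {0<..} s"
      by (simp add: sum_distrib_left[symmetric] mult_left_mono)
  qed
  finally show ?thesis .
qed

lemma suminf_upper_ennreal: "(f::nat \<Rightarrow> ennreal) m \<le> (\<Sum>k. f k)"
proof -
  have "(\<Sum>k\<in>{m}. f k) \<le> suminf f" by (rule sum_le_suminf) auto
  then show ?thesis by simp
qed

lemma g_bound:
  fixes E :: "real set" and d :: nat and \<beta> p q \<epsilon> C P :: real and g :: "real \<Rightarrow> real"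
  assumes E: "E \<subseteq> {1..2}" and \<beta>: "0 \<le> \<beta>" "\<beta> < 1"
    and cov: "\<And>\<delta>. 0 < \<delta> \<Longrightarrow> \<delta> < 1 \<Longrightarrow> \<delta> powr \<beta> * real (covering_number E \<delta>) \<le> C"
    and p: "1 \<le> p" "p \<le> q" and eps: "\<epsilon> > 0" "\<epsilon> * q = 1 - \<beta>"
    and alpha: "(real d - 1) * (1 - 1/p) - 1 + 1 - 1/p = -\<epsilon>"
    and g: "g \<in> borel_measurable lborel"
    and Pfin: "(\<integral>\<^sup>+ s\<in>{0<..}. ennreal (\<bar>g s\<bar> powr p) \<partial>lborel) = ennreal P" "P \<ge> 0"
  shows "(\<integral>\<^sup>+ r\<in>{0<..}. epow (maxop E d p g r) q * ennreal (r ^ (d - 1)) \<partial>lborel)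
         \<le> ennreal ((12 * max C 0 + 14) * 4 ^ (d - 1) * ((1 / (1 - (1/2) powr \<epsilon>)) powr q * (5 powr (p - 1) * P) powr (q / p)))"
proof -
  define \<alpha> where "\<alpha> = (real d - 1) * (1 - 1/p) - 1"
  have ae: "\<alpha> + 1 - 1/p = -\<epsilon>" using alpha by (simp add: \<alpha>_def)
  have p0: "p > 0" using p by simp
  have "1/p \<le> 1" using p by simp
  then have ale: "\<alpha> \<le> 0" using ae eps by linarith
  have q0: "q > 0" using p by simp
  define f where "f s = \<bar>g s\<bar>" for s
  have fm: "f \<in> borel_measurable lborel" unfolding f_def using g by measurable
  have f0: "\<And>s. f s \<ge> 0" by (simp add: f_def)
  note [measurable] = g fm Dset_sets Wset_sets
  define \<rho> where "\<rho> = (1/2::real) powr \<epsilon>"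
  have \<rho>0: "\<rho> > 0" by (simp add: \<rho>_def)
  have \<rho>1: "\<rho> < 1" unfolding \<rho>_def using eps powr_less_mono'[of "1/2::real" 0 \<epsilon>] by simp
  define A where "A = 12 * max C 0 + 14"
  have A0: "A > 0" by (simp add: A_def)
  define \<theta> where "\<theta> = (1/2::real) powr (1 - \<beta>)"
  define I where "I j = (\<integral>\<^sup>+ s\<in>Dset j. ennreal (f s powr p) \<partial>lborel)" for j
  have Isum: "(\<Sum>j<n. I j) \<le> ennreal P" for n
    unfolding I_def Pfin(1)[symmetric] f_def by (rule b_sum) measurable
  have Ifin: "I j = ennreal (enn2real (I j))" for j
  proof -
    have "I j \<le> (\<Sum>k<Suc j. I k)" by (rule member_le_sum) auto
    also have "\<dots> \<le> ennreal P" by (rule Isum)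
    finally have "I j < top" using ennreal_less_top order.strict_trans1 by blast
    then show ?thesis by simp
  qed
  define b where "b j = enn2real (I j)" for j
  have b0: "b j \<ge> 0" for j by (simp add: b_def)
  have bsum: "(\<Sum>j<n. b j) \<le> P" for n
  proof -
    have "ennreal (\<Sum>j<n. b j) = (\<Sum>j<n. ennreal (b j))" using b0 by simp
    also have "\<dots> = (\<Sum>j<n. I j)" unfolding b_def using Ifin by simp
    also have "\<dots> \<le> ennreal P" by (rule Isum)
    finally show ?thesis using Pfin(2) by simp
  qed
  define Y where "Y j = 5 powr (1 - 1/p) * b j powr (1/p)" for j
  have Y0: "Y j \<ge> 0" for j by (simp add: Y_def)
  have Ypow: "Y j powr p = 5 powr (p - 1) * b j" for j
  proof -
    have "Y j powr p = (5 powr (1 - 1/p)) powr p * (b j powr (1/p)) powr p"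
      unfolding Y_def by (rule powr_mult)
    also have "(5 powr (1 - 1/p)) powr p = (5::real) powr (p - 1)"
      using p0 by (simp add: powr_powr algebra_simps)
    also have "(b j powr (1/p)) powr p = b j"
      using p0 b0[of j] by (simp add: powr_powr powr_one)
    finally show ?thesis .
  qed
  define S where "S = 5 powr (p - 1) * P"
  have YS: "(\<Sum>j<n. Y j powr p) \<le> S" for n
  proof -
    have "(\<Sum>j<n. Y j powr p) = 5 powr (p - 1) * (\<Sum>j<n. b j)"
      unfolding Ypow by (simp add: sum_distrib_left)
    also have "\<dots> \<le> 5 powr (p - 1) * P" using bsum by (intro mult_left_mono) auto
    finally show ?thesis unfolding S_def .
  qed
  have abound: "(\<integral>\<^sup>+ s\<in>Dset j. ennreal (s powr \<alpha> * f s) \<partial>lborel) \<le> ennreal (Y j / \<rho>^j)" for j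
  proof -
    have "I j = ennreal (b j)" unfolding b_def using Ifin by simp
    then have "(\<integral>\<^sup>+ s\<in>Dset j. ennreal (f s powr p) \<partial>lborel) = ennreal (b j)" by (simp add: I_def)
    from a_bound[OF fm f0 p(1) ae ale this b0]
    show ?thesis by (simp add: Y_def \<rho>_def)
  qed
  have Fm: "(\<lambda>s. s powr \<alpha> * f s) \<in> borel_measurable lborel" by measurable
  have Tb: "(\<integral>\<^sup>+ s\<in>{(1/2)^m..6}. ennreal (s powr \<alpha> * f s) \<partial>lborel) \<le> ennreal (\<Sum>j\<le>m. Y j / \<rho>^j)" for m
    by (rule T_bound[OF Fm _ abound]) (use f0 Y0 \<rho>0 in simp_all)
  define z where "z m = (\<Sum>j\<le>m. \<rho>^(m - j) * Y j)" for m
  have z0: "z m \<ge> 0" for m unfolding z_def using Y0 \<rho>0 by (intro sum_nonneg) simp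
  have zeq: "(\<Sum>j\<le>m. Y j / \<rho>^j) = z m / \<rho>^m" for m
  proof -
    have "z m / \<rho>^m = (\<Sum>j\<le>m. \<rho>^(m - j) * Y j / \<rho>^m)" unfolding z_def by (simp add: sum_divide_distrib)
    also have "\<dots> = (\<Sum>j\<le>m. Y j / \<rho>^j)"
    proof (rule sum.cong)
      fix j assume "j \<in> {..m}"
      then have "\<rho>^(m - j) = \<rho>^m / \<rho>^j" using \<rho>0 by (simp add: power_diff)
      then show "\<rho>^(m - j) * Y j / \<rho>^m = Y j / \<rho>^j" using \<rho>0 by simp
    qed simp
    finally show ?thesis by simp
  qed
  have Mg: "maxop E d p g r \<le> ennreal (z m / \<rho>^m)" if "r \<in> Wset E m" "r \<notin> Wset E (Suc m)" for r m
  proof -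
    have "maxop E d p g r \<le> (\<integral>\<^sup>+ s\<in>{(1/2)^m..6}. ennreal (s powr \<alpha> * f s) \<partial>lborel)"
      unfolding \<alpha>_def f_def by (rule maxop_le_T[OF E that])
    also have "\<dots> \<le> ennreal (z m / \<rho>^m)" using Tb[of m] unfolding zeq .
    finally show ?thesis .
  qed
  define c where "c m = 4 ^ (d - 1) * (z m / \<rho>^m) powr q" for m
  have c0: "c m \<ge> 0" for m by (simp add: c_def)
  have pw: "AE r in lborel. epow (maxop E d p g r) q * ennreal (r ^ (d - 1)) * indicator {0<..} r
      \<le> (\<Sum>m. ennreal (c m) * indicator (Wset E m) r)"
  proof -
  have Z: "(\<Inter>m. Wset E m) \<in> null_sets lborel" by (rule Wset_null[OF E \<beta> cov])
  have sub: "{r \<in> space lborel. \<not> epow (maxop E d p g r) q * ennreal (r ^ (d - 1)) * indicator {0<..} r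
      \<le> (\<Sum>m. ennreal (c m) * indicator (Wset E m) r)} \<subseteq> (\<Inter>m. Wset E m)"
  proof (rule subsetI)
    fix r assume "r \<in> {r \<in> space lborel. \<not> epow (maxop E d p g r) q * ennreal (r ^ (d - 1)) * indicator {0<..} r
      \<le> (\<Sum>m. ennreal (c m) * indicator (Wset E m) r)}"
    then have nle: "\<not> epow (maxop E d p g r) q * ennreal (r ^ (d - 1)) * indicator {0<..} r
      \<le> (\<Sum>m. ennreal (c m) * indicator (Wset E m) r)" by simp
    show "r \<in> (\<Inter>m. Wset E m)"
    proof (rule ccontr)
      assume "r \<notin> (\<Inter>m. Wset E m)"
      then have ex: "\<exists>n. r \<notin> Wset E n" by simp
      show False
      proof (cases "r \<in> Wset E 0")
        case False
        then have "maxop E d p g r = 0" by (rule maxop_zero)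
        then have eq0: "epow (maxop E d p g r) q * ennreal (r ^ (d - 1)) * indicator {0<..} r = 0"
          using q0 by (simp add: epow_zero)
        have "epow (maxop E d p g r) q * ennreal (r ^ (d - 1)) * indicator {0<..} r
            \<le> (\<Sum>m. ennreal (c m) * indicator (Wset E m) r)" unfolding eq0 by (rule zero_le)
        then show False using nle by blast
      next
        case True
        define n where "n = (LEAST n. r \<notin> Wset E n)"
        have rn: "r \<notin> Wset E n" unfolding n_def using ex by (rule LeastI_ex)
        have n0: "n \<noteq> 0"
        proof
          assume "n = 0"
          then show False using rn True by simp
        qed
        define m where "m = n - 1"
        have nm: "n = Suc m" using n0 by (simp add: m_def)
        have rm: "r \<in> Wset E m"
        proof (rule ccontr)
          assume "r \<notin> Wset E m"
          then have "n \<le> m" unfolding n_def by (rule Least_le)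
          then show False using nm by simp
        qed
        have rI: "0 < r" "r < 4" using rm unfolding Wset_def by auto
        have "epow (maxop E d p g r) q \<le> ennreal ((z m / \<rho>^m) powr q)"
          using Mg[OF rm, unfolded nm[symmetric], OF rn] z0[of m] \<rho>0 q0
          by (intro epow_mono_ennreal) auto
        moreover have "r ^ (d - 1) \<le> 4 ^ (d - 1)" using rI by (intro power_mono) auto
        ultimately have "epow (maxop E d p g r) q * ennreal (r ^ (d - 1)) \<le> ennreal ((z m / \<rho>^m) powr q) * ennreal (4 ^ (d - 1))"
          by (intro mult_mono ennreal_leI) auto
        also have "\<dots> = ennreal (c m)" unfolding c_def by (subst ennreal_mult[symmetric]) (auto simp: mult.commute)
        also have "\<dots> = ennreal (c m) * indicator (Wset E m) r" using rm by simp
        also have "\<dots> \<le> (\<Sum>m. ennreal (c m) * indicator (Wset E m) r)"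
          by (rule suminf_upper_ennreal)
        finally have "epow (maxop E d p g r) q * ennreal (r ^ (d - 1)) * indicator {0<..} r
            \<le> (\<Sum>m. ennreal (c m) * indicator (Wset E m) r)"
          using rI by simp
        then show False using nle by simp
      qed
    qed
  qed
  show ?thesis by (rule AE_I'[OF Z sub])
  qed
  have "(\<integral>\<^sup>+ r\<in>{0<..}. epow (maxop E d p g r) q * ennreal (r ^ (d - 1)) \<partial>lborel)
      \<le> (\<integral>\<^sup>+ r. (\<Sum>m. ennreal (c m) * indicator (Wset E m) r) \<partial>lborel)"
    by (rule nn_integral_mono_AE[OF pw])
  also have "\<dots> = (\<Sum>m. \<integral>\<^sup>+ r. ennreal (c m) * indicator (Wset E m) r \<partial>lborel)"
    by (rule nn_integral_suminf) measurable
  also have "\<dots> = (\<Sum>m. ennreal (c m) * emeasure lborel (Wset E m))"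
    by (intro arg_cong[where f=suminf] ext nn_integral_cmult_indicator Wset_sets)
  also have "\<dots> \<le> (\<Sum>m. ennreal (A * 4 ^ (d - 1) * z m powr q))"
  proof (rule suminf_le)
    fix m
    have "ennreal (c m) * emeasure lborel (Wset E m) \<le> ennreal (c m) * ennreal (A * \<theta>^m)"
      unfolding A_def \<theta>_def using Wset_bound[OF E \<beta> cov, of m] by (rule mult_left_mono) auto
    also have "\<dots> = ennreal (c m * (A * \<theta>^m))" using c0[of m] A0 by (subst ennreal_mult[symmetric]) (auto simp: \<theta>_def)
    also have "c m * (A * \<theta>^m) = A * 4 ^ (d - 1) * z m powr q"
    proof -
      have "(\<rho>^m) powr q = \<theta>^m"
      proof -
        have "\<rho>^m = ((1/2)^m) powr \<epsilon>" unfolding \<rho>_def by (simp add: pow_half_powr)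
        then have "(\<rho>^m) powr q = ((1/2)^m) powr (\<epsilon> * q)" by (simp add: powr_powr)
        also have "\<dots> = \<theta>^m" unfolding eps(2) \<theta>_def by (rule pow_half_powr)
        finally show ?thesis .
      qed
      moreover have "\<theta> > 0" by (simp add: \<theta>_def)
      ultimately show ?thesis unfolding c_def by (simp add: powr_divide)
    qed
    finally show "ennreal (c m) * emeasure lborel (Wset E m) \<le> ennreal (A * 4 ^ (d - 1) * z m powr q)" .
  qed auto
  also have "\<dots> \<le> ennreal (A * 4 ^ (d - 1) * ((1 / (1 - \<rho>)) powr q * S powr (q / p)))"
  proof (rule suminf_le_const)
    fix N
    have "(\<Sum>m<N. ennreal (A * 4 ^ (d - 1) * z m powr q)) = ennreal (A * 4 ^ (d - 1) * (\<Sum>m<N. z m powr q))"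
      using A0 by (simp add: sum_distrib_left)
    also have "\<dots> \<le> ennreal (A * 4 ^ (d - 1) * ((1 / (1 - \<rho>)) powr q * S powr (q / p)))"
      using discrete_hardy[OF \<rho>0 \<rho>1 p Y0 YS, of N] A0 unfolding z_def
      by (intro ennreal_leI mult_left_mono) auto
    finally show "(\<Sum>m<N. ennreal (A * 4 ^ (d - 1) * z m powr q)) \<le> ennreal (A * 4 ^ (d - 1) * ((1 / (1 - \<rho>)) powr q * S powr (q / p)))" .
  qed simp
  finally show ?thesis unfolding A_def S_def \<rho>_def .
qed

lemma main_bound:
  fixes E :: "real set" and d :: nat and \<beta> p q \<epsilon> C :: real
  assumes E: "E \<subseteq> {1..2}" and \<beta>: "0 \<le> \<beta>" "\<beta> < 1"
    and cov: "\<And>\<delta>. 0 < \<delta> \<Longrightarrow> \<delta> < 1 \<Longrightarrow> \<delta> powr \<beta> * real (covering_number E \<delta>) \<le> C"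
    and p: "1 \<le> p" "p \<le> q" and eps: "\<epsilon> > 0" "\<epsilon> * q = 1 - \<beta>"
    and alpha: "(real d - 1) * (1 - 1/p) - 1 + 1 - 1/p = -\<epsilon>"
  shows "bounded_Lp_Lq_mu (maxop E d p) p q d"
proof -
  have p0: "p > 0" and q0: "q > 0" using p by auto
  define L where "L = 1 / (1 - (1/2::real) powr \<epsilon>)"
  have "(1/2::real) powr \<epsilon> < 1" using eps powr_less_mono'[of "1/2::real" 0 \<epsilon>] by simp
  then have L0: "L > 0" by (simp add: L_def)
  define K where "K = (12 * max C 0 + 14) * 4 ^ (d - 1) * (L powr q * (5 powr (p - 1)) powr (q / p))"
  have K0: "K > 0" using L0 by (simp add: K_def)
  define C0 where "C0 = K powr (1/q)"
  have C00: "C0 > 0" using K0 by (simp add: C0_def)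
  show ?thesis unfolding bounded_Lp_Lq_mu_def
  proof (rule exI[of _ C0], rule ballI)
    fix g :: "real \<Rightarrow> real" assume g: "g \<in> borel_measurable lborel"
    define P where "P = (\<integral>\<^sup>+ s\<in>{0<..}. ennreal (\<bar>g s\<bar> powr p) \<partial>lborel)"
    show "Lq_norm_mu d q (maxop E d p g) \<le> ennreal C0 * Lp_norm_leb p g"
    proof (cases "P = \<infinity>")
      case True
      then have "Lp_norm_leb p g = \<infinity>" unfolding Lp_norm_leb_def epow_def P_def[symmetric] by simp
      then have "ennreal C0 * Lp_norm_leb p g = \<infinity>" using C00 by (simp add: ennreal_mult_top)
      then show ?thesis by simp
    next
      case False
      then obtain Pr where Pr: "P = ennreal Pr" "Pr \<ge> 0" by (cases P rule: ennreal_cases) auto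
      have gb: "(\<integral>\<^sup>+ r\<in>{0<..}. epow (maxop E d p g r) q * ennreal (r ^ (d - 1)) \<partial>lborel)
         \<le> ennreal ((12 * max C 0 + 14) * 4 ^ (d - 1) * (L powr q * (5 powr (p - 1) * Pr) powr (q / p)))"
        unfolding L_def by (rule g_bound[OF E \<beta> cov p eps alpha g Pr(1)[unfolded P_def] Pr(2)])
      have eqK: "(12 * max C 0 + 14) * 4 ^ (d - 1) * (L powr q * (5 powr (p - 1) * Pr) powr (q / p)) = K * Pr powr (q / p)"
        unfolding K_def by (simp add: powr_mult)
      have "Lq_norm_mu d q (maxop E d p g) \<le> ennreal ((K * Pr powr (q / p)) powr (1/q))"
        unfolding Lq_norm_mu_def using gb unfolding eqK
        by (rule epow_mono_ennreal) (use K0 Pr(2) q0 in auto)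
      also have "(K * Pr powr (q / p)) powr (1/q) = C0 * Pr powr (1/p)"
        unfolding C0_def using K0 Pr(2) q0 p0 by (simp add: powr_mult powr_powr)
      also have "ennreal (C0 * Pr powr (1/p)) = ennreal C0 * Lp_norm_leb p g"
      proof -
        have "Lp_norm_leb p g = ennreal (Pr powr (1/p))"
          unfolding Lp_norm_leb_def P_def[symmetric] Pr(1) using Pr(2) by (rule epow_ennreal)
        then show ?thesis using C00 by (simp add: ennreal_mult)
      qed
      finally show ?thesis .
    qed
  qed
qed

theorem proposition2p7:
  fixes E :: "real set" and d :: nat and \<beta> p0 p1 :: real
  assumes "E \<subseteq> {1..2}" and "d \<ge> 2"
    and "0 \<le> \<beta>" and "\<beta> < 1"
    and "\<exists>C. \<forall>\<delta>. 0 < \<delta> \<and> \<delta> < 1 \<longrightarrow> \<delta> powr \<beta> * real (covering_number E \<delta>) \<le> C"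
    and "p0 = 1 + \<beta> / (real d - 1)" and "p1 = 1 + p0 / real d"
  shows "bounded_Lp_Lq_mu (maxop E d p0) p0 p0 d \<and>
         bounded_Lp_Lq_mu (maxop E d p1) p1 (p1 * real d) d"
proof -
  obtain C where C: "\<forall>\<delta>. 0 < \<delta> \<and> \<delta> < 1 \<longrightarrow> \<delta> powr \<beta> * real (covering_number E \<delta>) \<le> C"
    using assms(5) by blast
  have cov: "\<And>\<delta>. 0 < \<delta> \<Longrightarrow> \<delta> < 1 \<Longrightarrow> \<delta> powr \<beta> * real (covering_number E \<delta>) \<le> C"
    using C by blast
  define D where "D = real d - 1"
  have D1: "D \<ge> 1" using assms(2) by (simp add: D_def)
  have rd: "real d = D + 1" by (simp add: D_def)
  have p0D: "p0 = 1 + \<beta> / D" using assms(6) by (simp add: D_def)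
  have p01: "p0 \<ge> 1" using p0D D1 assms(3) by simp
  have p0pos: "p0 > 0" using p01 by simp
  have p0eq: "D * (p0 - 1) = \<beta>" using p0D D1 by simp
  have p1eq: "p1 = 1 + p0 / (D + 1)" using assms(7) rd by simp
  have p11: "p1 \<ge> 1" using p1eq p0pos D1 by simp
  have p1pos: "p1 > 0" using p11 by simp
  have b1: "0 < 1 - \<beta>" using assms(4) by simp
  have first: "bounded_Lp_Lq_mu (maxop E d p0) p0 p0 d"
  proof (rule main_bound[OF assms(1) assms(3) assms(4) cov])
    show "1 \<le> p0" "p0 \<le> p0" using p01 by auto
    show "(1 - \<beta>) / p0 > 0" using b1 p0pos by simp
    show "(1 - \<beta>) / p0 * p0 = 1 - \<beta>" using p0pos by simp
    have "(real d - 1) * (1 - 1/p0) - 1 + 1 - 1/p0 = (D * (p0 - 1) - 1) / p0"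
      unfolding D_def using p0pos by (simp add: field_simps)
    also have "\<dots> = -((1 - \<beta>) / p0)" unfolding p0eq minus_divide_left by simp
    finally show "(real d - 1) * (1 - 1/p0) - 1 + 1 - 1/p0 = -((1 - \<beta>) / p0)" .
  qed
  have second: "bounded_Lp_Lq_mu (maxop E d p1) p1 (p1 * real d) d"
  proof (rule main_bound[OF assms(1) assms(3) assms(4) cov])
    show "1 \<le> p1" using p11 by simp
    show "p1 \<le> p1 * real d" using p1pos assms(2) by simp
    show "(1 - \<beta>) / (p1 * real d) > 0" using b1 p1pos assms(2) by simp
    show "(1 - \<beta>) / (p1 * real d) * (p1 * real d) = 1 - \<beta>" using p1pos assms(2) by simp
    have pd: "(D + 1) * (p1 - 1) = p0" using p1eq D1 by simp
    have "(real d - 1) * (1 - 1/p1) - 1 + 1 - 1/p1 = ((D + 1) * (p1 - 1) - p1) / p1"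
      unfolding D_def using p1pos by (simp add: field_simps)
    also have "\<dots> = (p0 - p1) / p1" unfolding pd ..
    also have "p0 - p1 = -((1 - \<beta>) / (D + 1))"
    proof -
      have "p0 - p1 = p0 - 1 - p0 / (D + 1)" using p1eq by simp
      also have "\<dots> = (D * p0 - (D + 1)) / (D + 1)" using D1 by (simp add: field_simps)
      also have "D * p0 = D + \<beta>" using p0eq by (simp add: algebra_simps)
      finally show ?thesis unfolding minus_divide_left by simp
    qed
    also have "-((1 - \<beta>) / (D + 1)) / p1 = -((1 - \<beta>) / (p1 * real d))" unfolding rd by simp
    finally show "(real d - 1) * (1 - 1/p1) - 1 + 1 - 1/p1 = -((1 - \<beta>) / (p1 * real d))" .
  qed
  from first second show ?thesis ..
qed

end
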